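(* Let $n\ge 2$, $m\ge 0$, $1\le k\le n-1$. Let $(b,e)=(2k,n+k)$ or $(b,e)=(2k-1,n+k-1)$, and let $G$ be the group with presentation $$\langle \alpha,\beta\mid [(\alpha\beta^{n-k+1}\alpha\beta^{-n+k})^{e}(\alpha\beta)^{-b+1}\beta^{-n+k-1}]^{m+1}=\alpha\beta^{n-k+1}\alpha\beta^{-n+k}\rangle.$$ Let $Q$ be any quotient group of $G$ (in particular, the fundamental group of any Dehn surgery on the corresponding knot), with $\alpha,\beta$ also denoting their images in $Q$. For any homomorphism $\Phi:Q\to\mathrm{Homeo}^+(\mathbb{R})$, if $\Phi(\alpha)(t)>t$ for all $t\in\mathbb{R}$, then $\Phi(\beta)(t)\ge t$ for all $t\in\mathbb{R}$.
   Context: $\mathrm{Homeo}^+(\mathbb{R})$ is the group of order-preserving homeomorphisms of $\mathbb{R}$. For $(b,e)=(2k,n+k)$, $G$ is the knot group of the closure of $(\sigma_1\cdots\sigma_{2k})(\sigma_1\cdots\sigma_{2n})^{2n-1+m(2n+1)}$ on $2n+1$ strands; for $(b,e)=(2k-1,n+k-1)$, $G$ is the knot group of the closure of $(\sigma_1\cdots\sigma_{2k-1})(\sigma_1\cdots\sigma_{2n-1})^{2n-2+2mn}$ on $2n$ strands. *)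

theory Defs
  imports "HOL-Analysis.Analysis" "HOL-Algebra.Algebra"
begin

definition homeo_plus :: "(real \<Rightarrow> real) monoid" where
  "homeo_plus = \<lparr> carrier = {f. (\<exists>g. homeomorphism UNIV UNIV f g) \<and> strict_mono f},
                   mult = (\<lambda>f g. f \<circ> g), one = id \<rparr>"

text \<open>The defining relator of the presented group G, evaluated in a group Q.\<close>
definition knot_rel :: "('g, 'x) monoid_scheme \<Rightarrow> nat \<Rightarrow> nat \<Rightarrow> nat \<Rightarrow> nat \<Rightarrow> nat \<Rightarrow> 'g \<Rightarrow> 'g \<Rightarrow> bool" where
  "knot_rel Q n k m b e a c \<longleftrightarrow>
     (let w = a \<otimes>\<^bsub>Q\<^esub> (c [^]\<^bsub>Q\<^esub> (int n - int k + 1)) \<otimes>\<^bsub>Q\<^esub> a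
                 \<otimes>\<^bsub>Q\<^esub> (c [^]\<^bsub>Q\<^esub> (- int n + int k))
      in ((w [^]\<^bsub>Q\<^esub> e) \<otimes>\<^bsub>Q\<^esub> ((a \<otimes>\<^bsub>Q\<^esub> c) [^]\<^bsub>Q\<^esub> (- int b + 1))
            \<otimes>\<^bsub>Q\<^esub> (c [^]\<^bsub>Q\<^esub> (- int n + int k - 1))) [^]\<^bsub>Q\<^esub> (m + 1) = w)"

end

theory Submission imports Defs begin

lemma (in group) key_rel:
  assumes w: "w \<in> carrier G" and Z: "Z \<in> carrier G" and e: "e \<ge> 1"
    and r: "(w [^] (e::nat) \<otimes> inv Z) [^] (Suc m) = w"
  shows "w [^] (Suc m * e - 1) = Z [^] (Suc m)"
proof -
  define x where "x = w [^] e \<otimes> inv Z"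
  define N where "N = Suc m * e - 1"
  have xc: "x \<in> carrier G" using w Z by (simp add: x_def)
  have N: "Suc m * e = Suc N" using e by (simp add: N_def)
  have xm: "x [^] (Suc m) = w" using r by (simp only: x_def)
  have we: "w [^] e = x [^] (Suc m * e)" using xm xc by (metis nat_pow_pow)
  have "x = x [^] (Suc N) \<otimes> inv Z" using we N by (simp add: x_def)
  also have "\<dots> = (x \<otimes> x [^] N) \<otimes> inv Z" by (simp only: nat_pow_Suc2[OF xc])
  also have "\<dots> = x \<otimes> (x [^] N \<otimes> inv Z)" using xc Z by (simp add: m_assoc)
  finally have "x \<otimes> \<one> = x \<otimes> (x [^] N \<otimes> inv Z)" using xc by simp
  hence "x [^] N \<otimes> inv Z = \<one>" using xc Z by (metis l_cancel one_closed nat_pow_closed m_closed inv_closed)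
  hence "inv (inv Z) = x [^] N" using xc Z by (intro inv_equality) auto
  hence XN: "Z = x [^] N" using Z by simp
  have "w [^] N = x [^] (Suc m * N)" using xm xc by (metis nat_pow_pow)
  also have "\<dots> = Z [^] Suc m" using XN xc by (metis nat_pow_pow mult.commute)
  finally show ?thesis by (simp add: N_def)
qed

lemma (in group) conj_pow:
  assumes "c \<in> carrier G" "y \<in> carrier G"
  shows "(c \<otimes> y \<otimes> inv c) [^] (j::nat) \<otimes> c = c \<otimes> y [^] j"
proof (induction j)
  case 0 thus ?case using assms by simp
next
  case (Suc j)
  have "(c \<otimes> y \<otimes> inv c) [^] Suc j \<otimes> c = ((c \<otimes> y \<otimes> inv c) [^] j \<otimes> c) \<otimes> y"
    using assms by (simp add: m_assoc)
  also have "\<dots> = c \<otimes> y [^] Suc j" using Suc assms by (simp add: m_assoc)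
  finally show ?case .
qed

lemma le_comp:
  fixes p1 p2 q1 q2 :: "real \<Rightarrow> real"
  assumes "\<forall>t. p1 t \<le> q1 t" "\<forall>t. p2 t \<le> q2 t" "mono q1"
  shows "p1 (p2 t) \<le> q1 (q2 t)"
  using assms by (meson monoD order_trans)

lemma le_pow:
  fixes p q :: "real \<Rightarrow> real"
  assumes "\<forall>t. p t \<le> q t" "mono q" shows "(p ^^ j) t \<le> (q ^^ j) t"
proof (induction j arbitrary: t)
  case 0 thus ?case by simp
next
  case (Suc j)
  have "p ((p^^j) t) \<le> q ((p^^j) t)" using assms by auto
  also have "\<dots> \<le> q ((q^^j) t)" using Suc assms(2) by (simp add: monoD)
  finally show ?case by simp
qed

lemma mono_pow': "mono (q::real\<Rightarrow>real) \<Longrightarrow> mono (q ^^ j)"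
  by (simp add: mono_def funpow_mono)

lemma funpow_shift: "(A \<circ> B) ^^ Suc j = A \<circ> (B \<circ> A) ^^ j \<circ> B"
proof (induction j)
  case 0 thus ?case by simp
next
  case (Suc j)
  have "(A \<circ> B) ^^ Suc (Suc j) = (A \<circ> B) \<circ> (A \<circ> B) ^^ Suc j" by (simp only: funpow.simps(2))
  also have "\<dots> = (A \<circ> B) \<circ> (A \<circ> (B \<circ> A) ^^ j \<circ> B)" by (simp only: Suc.IH)
  also have "\<dots> = A \<circ> ((B \<circ> A) \<circ> (B \<circ> A) ^^ j) \<circ> B" by (simp only: comp_assoc)
  also have "\<dots> = A \<circ> (B \<circ> A) ^^ Suc j \<circ> B" by (simp only: funpow.simps(2))
  finally show ?case .
qed

theorem mainTheorem11:
  fixes Q :: "('g, 'x) monoid_scheme" (structure)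
    and n m k b e :: nat and \<alpha> \<beta> :: 'g and \<Phi> :: "'g \<Rightarrow> real \<Rightarrow> real"
  assumes "n \<ge> 2" and "1 \<le> k" and "k \<le> n - 1"
    and "(b, e) = (2*k, n+k) \<or> (b, e) = (2*k - 1, n+k-1)"
    and "group Q" and "\<alpha> \<in> carrier Q" and "\<beta> \<in> carrier Q"
    and "generate Q {\<alpha>, \<beta>} = carrier Q"
    and "knot_rel Q n k m b e \<alpha> \<beta>"
    and "\<Phi> \<in> hom Q homeo_plus"
    and "\<forall>t. \<Phi> \<alpha> t > t"
  shows "\<forall>t. \<Phi> \<beta> t \<ge> t"
proof -
  interpret group Q by fact
  note a = assms(6) and c = assms(7) and hF = assms(10)
  define p where "p = n - k + 1"
  have p1: "p \<ge> 1" by (simp add: p_def)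
  have b1: "b \<ge> 1" using assms(2,4) by auto
  have ep: "e = p + (b - 1)" using assms(1-4) by (auto simp: p_def)
  have e1: "e \<ge> 1" using ep p1 by simp
  have i1: "int n - int k + 1 = int p" using assms(1-3) by (simp add: p_def)
  have i2: "- int n + int k = 1 + - int p" using assms(1-3) by (simp add: p_def)
  have i3: "- int n + int k - 1 = - int p" using assms(1-3) by (simp add: p_def)
  have i4: "- int b + 1 = - int (b - 1)" using b1 by simp
  define y where "y = \<alpha> \<otimes> \<beta>"
  define cp where "cp = \<beta> [^] p"
  define V where "V = cp \<otimes> y \<otimes> inv cp"
  define Z where "Z = cp \<otimes> y [^] (b - 1)"
  define w where "w = \<alpha> \<otimes> (\<beta> [^] (int n - int k + 1)) \<otimes> \<alpha> \<otimes> (\<beta> [^] (- int n + int k))"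
  have yc: "y \<in> carrier Q" and cpc: "cp \<in> carrier Q" using a c by (auto simp: y_def cp_def)
  have Vc: "V \<in> carrier Q" and Zc: "Z \<in> carrier Q" using yc cpc by (auto simp: V_def Z_def)
  have "\<beta> [^] (- int n + int k) = \<beta> [^] (1 + - int p)" by (simp only: i2)
  also have "\<dots> = \<beta> \<otimes> inv cp" using c by (simp only: int_pow_mult int_pow_neg_int cp_def int_pow_1)
  finally have b2: "\<beta> [^] (- int n + int k) = \<beta> \<otimes> inv cp" .
  have b1': "\<beta> [^] (int n - int k + 1) = cp" by (simp only: i1 int_pow_int cp_def)
  have w_eq: "w = \<alpha> \<otimes> V"
    using a c cpc unfolding w_def b1' b2 by (simp add: V_def y_def m_assoc)
  have wc: "w \<in> carrier Q" using a Vc w_eq by simp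
  have Yd: "(\<alpha> \<otimes> \<beta>) [^] (- int b + 1) \<otimes> \<beta> [^] (- int n + int k - 1) = inv Z"
    unfolding i3 i4 using a c yc cpc by (simp add: int_pow_neg_int y_def[symmetric] cp_def[symmetric] Z_def inv_mult_group)
  have Yd2: "w [^] e \<otimes> (\<alpha> \<otimes> \<beta>) [^] (- int b + 1) \<otimes> \<beta> [^] (- int n + int k - 1) = w [^] e \<otimes> inv Z"
    using wc a c by (simp only: m_assoc Yd nat_pow_closed int_pow_closed m_closed)
  have rel: "(w [^] e \<otimes> inv Z) [^] (Suc m) = w"
    using assms(9) unfolding knot_rel_def Let_def w_def[symmetric] Yd2 Suc_eq_plus1 .
  define N where "N = Suc m * e - 1"
  have key: "w [^] N = Z [^] Suc m" using key_rel[OF wc Zc e1 rel] by (simp add: N_def)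
  have "Suc m * e = e * m + e" by simp
  hence Ne0: "N = e * m + (e - 1)" using e1 unfolding N_def by linarith
  have "e - 1 = (b - 1) + (p - 1)" using ep p1 by simp
  hence Ne: "N = e * m + ((b - 1) + (p - 1))" using Ne0 by simp
  have Fcar: "\<And>u. u \<in> carrier Q \<Longrightarrow> strict_mono (\<Phi> u) \<and> (\<exists>g. homeomorphism UNIV UNIV (\<Phi> u) g)"
    using hF by (auto simp: hom_def homeo_plus_def)
  have Fmul: "\<And>u v. u \<in> carrier Q \<Longrightarrow> v \<in> carrier Q \<Longrightarrow> \<Phi> (u \<otimes> v) = \<Phi> u \<circ> \<Phi> v"
    using hF by (auto simp: hom_def homeo_plus_def)
  have F1: "\<Phi> \<one> = id"
  proof
    fix t
    have "\<Phi> \<one> = \<Phi> \<one> \<circ> \<Phi> \<one>" using Fmul[of \<one> \<one>] by simp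
    hence "\<Phi> \<one> (\<Phi> \<one> t) = \<Phi> \<one> t" by (metis comp_apply)
    thus "\<Phi> \<one> t = id t" using Fcar[of \<one>] by (simp add: strict_mono_eq)
  qed
  have Fpow: "\<And>u j. u \<in> carrier Q \<Longrightarrow> \<Phi> (u [^] (j::nat)) = \<Phi> u ^^ j"
  proof -
    fix u and j :: nat assume u: "u \<in> carrier Q"
    show "\<Phi> (u [^] j) = \<Phi> u ^^ j"
      by (induction j) (simp_all add: F1 Fmul u funpow_Suc_right del: funpow.simps)
  qed
  have Fmono: "\<And>u. u \<in> carrier Q \<Longrightarrow> mono (\<Phi> u)"
    using Fcar strict_mono_mono by blast
  define f where "f = \<Phi> \<alpha>"
  define g where "g = \<Phi> \<beta>"
  define Y where "Y = \<Phi> y"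
  have Yfg: "Y = f \<circ> g" using a c by (simp add: Y_def y_def Fmul f_def g_def)
  have gY: "\<forall>t. g t \<le> Y t" using assms(11) by (simp add: Yfg f_def less_imp_le)
  have mY: "mono Y" using Fmono yc by (simp add: Y_def)
  have mg: "mono g" using Fmono c by (simp add: g_def)
  have gpY: "\<And>j. \<forall>t. (g ^^ j) t \<le> (Y ^^ j) t" using le_pow[OF gY mY] by blast
  have Fw: "\<Phi> w = f \<circ> \<Phi> V" using a Vc w_eq by (simp add: Fmul f_def)
  have VW: "\<forall>t. \<Phi> V t \<le> \<Phi> w t" using assms(11) by (simp add: Fw f_def less_imp_le)
  have mW: "mono (\<Phi> w)" using Fmono wc by simp
  have A: "\<And>t. (\<Phi> V ^^ N) t \<le> (\<Phi> w ^^ N) t" using le_pow[OF VW mW] by blast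
  have gcp: "\<Phi> cp = g ^^ p" using c by (simp add: cp_def Fpow g_def)
  have VC: "\<Phi> V ^^ N \<circ> g ^^ p = g ^^ p \<circ> Y ^^ N"
  proof -
    have "V [^] N \<otimes> cp = cp \<otimes> y [^] N" using conj_pow[OF cpc yc] by (simp add: V_def)
    hence "\<Phi> (V [^] N \<otimes> cp) = \<Phi> (cp \<otimes> y [^] N)" by simp
    thus ?thesis using Vc cpc yc by (simp add: Fmul Fpow gcp Y_def)
  qed
  have FZ: "\<Phi> Z = g ^^ p \<circ> Y ^^ (b - 1)" using cpc yc by (simp add: Z_def Fmul Fpow gcp Y_def)
  have B: "\<And>t. (\<Phi> Z ^^ Suc m) ((g ^^ (p - 1)) t) \<le> (g ^^ p) ((Y ^^ N) t)"
  proof -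
    fix t
    have blk: "\<forall>t. (Y ^^ (b - 1) \<circ> g ^^ p) t \<le> (Y ^^ e) t"
    proof
      fix t
      have "(Y ^^ (b - 1)) ((g ^^ p) t) \<le> (Y ^^ (b - 1)) ((Y ^^ p) t)"
        using gpY mono_pow'[OF mY] by (simp add: monoD)
      thus "(Y ^^ (b - 1) \<circ> g ^^ p) t \<le> (Y ^^ e) t" using ep funpow_add[of "b - 1" p Y] by (simp add: add.commute)
    qed
    have mYe: "mono (Y ^^ e)" using mono_pow'[OF mY] by blast
    have s1: "((Y ^^ (b - 1) \<circ> g ^^ p) ^^ m) u \<le> (Y ^^ (e * m)) u" for u
      using le_pow[OF blk mYe, of m u] by (simp only: funpow_mult)
    have s2: "(Y ^^ (b - 1)) ((g ^^ (p - 1)) t) \<le> (Y ^^ ((b - 1) + (p - 1))) t"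
      using gpY mono_pow'[OF mY] by (simp add: monoD funpow_add)
    have "((Y ^^ (b - 1) \<circ> g ^^ p) ^^ m) ((Y ^^ (b - 1)) ((g ^^ (p - 1)) t))
        \<le> (Y ^^ (e * m)) ((Y ^^ ((b - 1) + (p - 1))) t)"
      using le_comp[of "(Y ^^ (b - 1) \<circ> g ^^ p) ^^ m" "Y ^^ (e * m)"] s1 s2 mono_pow'[OF mY]
      by (meson monoD order_trans)
    also have "\<dots> = (Y ^^ N) t" using Ne by (simp add: funpow_add)
    finally have inner: "((Y ^^ (b - 1) \<circ> g ^^ p) ^^ m) ((Y ^^ (b - 1)) ((g ^^ (p - 1)) t)) \<le> (Y ^^ N) t" .
    have "(\<Phi> Z ^^ Suc m) ((g ^^ (p - 1)) t)
        = (g ^^ p) (((Y ^^ (b - 1) \<circ> g ^^ p) ^^ m) ((Y ^^ (b - 1)) ((g ^^ (p - 1)) t)))"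
      unfolding FZ funpow_shift by simp
    also have "\<dots> \<le> (g ^^ p) ((Y ^^ N) t)" using inner mono_pow'[OF mg] by (simp add: monoD)
    finally show "(\<Phi> Z ^^ Suc m) ((g ^^ (p - 1)) t) \<le> (g ^^ p) ((Y ^^ N) t)" .
  qed
  define P where "P = \<Phi> (w [^] N)"
  have smP: "strict_mono P" using Fcar wc by (simp add: P_def)
  have P1: "P = \<Phi> w ^^ N" using wc by (simp add: P_def Fpow)
  have P2: "P = \<Phi> Z ^^ Suc m" using Fpow[OF Zc, of "Suc m"] key by (simp only: P_def)
  have gp: "g ^^ p = g \<circ> g ^^ (p - 1)" using p1 by (metis Suc_diff_1 funpow.simps(2) less_le_trans zero_less_one)
  show ?thesis
  proof
    fix s
    obtain h where "homeomorphism UNIV UNIV (\<Phi> (\<beta> [^] (p - 1))) h" using Fcar c by blast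
    hence "\<Phi> (\<beta> [^] (p - 1)) (h s) = s" by (simp add: homeomorphism_def)
    hence ts: "(g ^^ (p - 1)) (h s) = s" using c by (simp add: Fpow g_def)
    define t where "t = h s"
    have "P s = (\<Phi> Z ^^ Suc m) ((g ^^ (p - 1)) t)" using ts by (simp add: P2 t_def)
    also have "\<dots> \<le> (g ^^ p) ((Y ^^ N) t)" by (rule B)
    also have "\<dots> = (\<Phi> V ^^ N) ((g ^^ p) t)" using VC by (metis comp_apply)
    also have "\<dots> \<le> (\<Phi> w ^^ N) ((g ^^ p) t)" by (rule A)
    also have "\<dots> = P (g s)" using ts gp by (simp add: P1 t_def)
    finally have "P s \<le> P (g s)" .
    thus "\<Phi> \<beta> s \<ge> s" using smP by (simp add: strict_mono_less_eq g_def)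
  qed
qed

end
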